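(* Let $\Theta$ be a compact subset of $(0,1/2)\times(\mathbb{R}^2\setminus\Delta)$, $\Delta=\{(x,x):x\in\mathbb{R}\}$, and let $P<1/2$ be such that $p\le P$ for all $(p,\alpha,\beta)\in\Theta$. Let $X_1,\dots,X_n$ be real numbers. For $\theta=(p,\alpha,\beta)\in\Theta$, $u\in\mathbb{R}$, let $M(\theta,u)=pe^{iu\alpha}+(1-p)e^{iu\beta}$ and $$Z_k(\theta,u)=\frac{e^{iuX_k}}{M(\theta,u)}-\frac{e^{-iuX_k}}{M(\theta,-u)},$$ with $\dot Z_k$ and $\ddot Z_k$ its gradient and Hessian with respect to $\theta$. Then there is an absolute constant $C>0$ such that for all $u\in\mathbb{R}$, all $\theta,\theta'\in\Theta$ and all $k\in\{1,\dots,n\}$: 1. $\|\dot Z_k(\theta,u)-\dot Z_k(\theta',u)\|\le\|\theta-\theta'\|\cdot\frac{C(1+|u|+u^2)}{(1-2P)^3}$; 2. $\|\ddot Z_k(\theta,u)-\ddot Z_k(\theta',u)\|_2\le\|\theta-\theta'\|\cdot\frac{C(1+|u|+u^2+|u|^3)}{(1-2P)^4}$.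
   Context: $\|v\|$ is the Euclidean (Hermitian) norm of a vector and $\|A\|_2^2=\mathrm{tr}(A^\top A)$ for a matrix $A$. *)

theory Defs
  imports "HOL-Analysis.Analysis"
begin

text \<open>Parameters theta = (p, alpha, beta) are elements of real * real * real;
  the product norm on this type is the Euclidean norm of R^3.\<close>

definition Mfun :: "real \<times> real \<times> real \<Rightarrow> real \<Rightarrow> complex" where
  "Mfun \<theta> u = (case \<theta> of (p, \<alpha>, \<beta>) \<Rightarrow>
      complex_of_real p * exp (\<i> * complex_of_real (u * \<alpha>))
      + complex_of_real (1 - p) * exp (\<i> * complex_of_real (u * \<beta>)))"

definition Zfun :: "(nat \<Rightarrow> real) \<Rightarrow> nat \<Rightarrow> real \<times> real \<times> real \<Rightarrow> real \<Rightarrow> complex" where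
  "Zfun X k \<theta> u =
     exp (\<i> * complex_of_real (u * X k)) / Mfun \<theta> u
     - exp (- \<i> * complex_of_real (u * X k)) / Mfun \<theta> (- u)"

definition ebasis :: "nat \<Rightarrow> real \<times> real \<times> real" where
  "ebasis j = (if j = 0 then (1, 0, 0) else if j = 1 then (0, 1, 0) else (0, 0, 1))"

definition pderiv3 :: "nat \<Rightarrow> (real \<times> real \<times> real \<Rightarrow> complex) \<Rightarrow> real \<times> real \<times> real \<Rightarrow> complex" where
  "pderiv3 j f \<theta> = vector_derivative (\<lambda>t. f (\<theta> + t *\<^sub>R ebasis j)) (at 0)"

definition grad_dist :: "(real \<times> real \<times> real \<Rightarrow> complex) \<Rightarrow> real \<times> real \<times> real \<Rightarrow> real \<times> real \<times> real \<Rightarrow> real" where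
  "grad_dist f \<theta> \<theta>' = sqrt (\<Sum>j<3. (cmod (pderiv3 j f \<theta> - pderiv3 j f \<theta>'))\<^sup>2)"

definition hess_dist :: "(real \<times> real \<times> real \<Rightarrow> complex) \<Rightarrow> real \<times> real \<times> real \<Rightarrow> real \<times> real \<times> real \<Rightarrow> real" where
  "hess_dist f \<theta> \<theta>' = sqrt (\<Sum>i<3. \<Sum>j<3.
      (cmod (pderiv3 i (pderiv3 j f) \<theta> - pderiv3 i (pderiv3 j f) \<theta>'))\<^sup>2)"

end

theory Submission
  imports Defs
begin


lemma bound2:
  fixes a b c x :: complex
  assumes "norm a \<le> 2*w^2" "norm b \<le> 2*w" "norm c \<le> 2*w" "norm x \<le> r" "1 \<le> r" "1 \<le> w"
  shows "norm (-(a*x^2) + 2*(b*c)*x^3) \<le> 10*w^2*r^3"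
proof -
  have "norm (-(a*x^2) + 2*(b*c)*x^3) \<le> norm a * norm x^2 + 2*(norm b*norm c)*norm x^3"
    by (rule order_trans[OF norm_triangle_ineq]) (simp add: norm_mult norm_power)
  also have "\<dots> \<le> (2*w^2) * r^2 + 2*((2*w)*(2*w))*r^3"
    using assms by (intro add_mono mult_mono power_mono) auto
  also have "\<dots> \<le> (2*w^2) * r^3 + 2*((2*w)*(2*w))*r^3"
    using assms by (intro add_mono mult_left_mono power_increasing) auto
  finally show ?thesis by (simp add: power2_eq_square algebra_simps)
qed

lemma bound3:
  fixes a b1 b2 b3 c1 c2 c3 d1 d2 d3 x :: complex
  assumes "norm a \<le> 2*w^3" "norm b1 \<le> 2*w^2" "norm b2 \<le> 2*w^2" "norm b3 \<le> 2*w^2"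
    "norm c1 \<le> 2*w" "norm c2 \<le> 2*w" "norm c3 \<le> 2*w"
    "norm d1 \<le> 2*w" "norm d2 \<le> 2*w" "norm d3 \<le> 2*w"
    "norm x \<le> r" "1 \<le> r" "1 \<le> w"
  shows "norm (-(a*x^2) + 2*(b1*c1 + b2*c2 + b3*c3)*x^3 - 6*(d1*d2*d3)*x^4) \<le> 74*w^3*r^4"
proof -
  have "norm (-(a*x^2) + 2*(b1*c1 + b2*c2 + b3*c3)*x^3 - 6*(d1*d2*d3)*x^4)
     \<le> norm a * norm x^2 + 2*(norm b1*norm c1 + norm b2*norm c2 + norm b3*norm c3)*norm x^3 + 6*(norm d1*norm d2*norm d3)*norm x^4"
  proof -
    have "norm (-(a*x^2) + 2*(b1*c1 + b2*c2 + b3*c3)*x^3 - 6*(d1*d2*d3)*x^4)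
      \<le> norm (-(a*x^2)) + norm (2*(b1*c1 + b2*c2 + b3*c3)*x^3) + norm (6*(d1*d2*d3)*x^4)"
      using norm_triangle_ineq4[of "-(a*x^2) + 2*(b1*c1 + b2*c2 + b3*c3)*x^3" "6*(d1*d2*d3)*x^4"]
        norm_triangle_ineq[of "-(a*x^2)" "2*(b1*c1 + b2*c2 + b3*c3)*x^3"] by linarith
    moreover have "norm (2*(b1*c1 + b2*c2 + b3*c3)*x^3) \<le> 2*(norm b1*norm c1 + norm b2*norm c2 + norm b3*norm c3)*norm x^3"
    proof -
      have "norm (b1*c1 + b2*c2 + b3*c3) \<le> norm (b1*c1) + norm (b2*c2) + norm (b3*c3)"
        using norm_triangle_ineq[of "b1*c1+b2*c2" "b3*c3"] norm_triangle_ineq[of "b1*c1" "b2*c2"] by linarith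
      then have "norm (b1*c1 + b2*c2 + b3*c3) \<le> norm b1*norm c1 + norm b2*norm c2 + norm b3*norm c3"
        by (simp add: norm_mult)
      moreover have "norm (2*(b1*c1 + b2*c2 + b3*c3)*x^3) = 2 * norm (b1*c1 + b2*c2 + b3*c3) * norm x^3"
        by (simp only: norm_mult norm_power norm_numeral)
      ultimately show ?thesis by (simp add: mult_right_mono)
    qed
    ultimately show ?thesis by (simp add: norm_mult norm_power)
  qed
  also have "\<dots> \<le> (2*w^3)*r^2 + 2*((2*w^2)*(2*w) + (2*w^2)*(2*w) + (2*w^2)*(2*w))*r^3 + 6*((2*w)*(2*w)*(2*w))*r^4"
    using assms by (intro add_mono mult_mono power_mono) auto
  also have "\<dots> \<le> (2*w^3)*r^4 + 2*((2*w^2)*(2*w) + (2*w^2)*(2*w) + (2*w^2)*(2*w))*r^4 + 6*((2*w)*(2*w)*(2*w))*r^4"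
    using assms by (intro add_mono mult_left_mono power_increasing) auto
  finally show ?thesis by (simp add: power2_eq_square power3_eq_cube algebra_simps)
qed

lemma mvt1:
  fixes g :: "real \<Rightarrow> complex"
  assumes D: "\<And>t. t \<in> closed_segment a b \<Longrightarrow> (g has_vector_derivative g' t) (at t)"
    and B: "\<And>t. t \<in> closed_segment a b \<Longrightarrow> norm (g' t) \<le> B"
  shows "norm (g b - g a) \<le> 3 * B * \<bar>b - a\<bar>"
proof -
  have a: "a \<in> closed_segment a b" by simp
  have "norm (g b - g a - (b - a) *\<^sub>R g' a) \<le> norm (b - a) * (2*B)"
  proof (rule vector_differentiable_bound_linearization[where S="closed_segment a b"])
    show "(g has_vector_derivative g' x) (at x within closed_segment a b)" if "x \<in> closed_segment a b" for x
      using D[OF that] by (rule has_vector_derivative_at_within)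
    show "norm (g' x - g' a) \<le> 2 * B" if "x \<in> closed_segment a b" for x
      using B[OF that] B[OF a] norm_triangle_ineq4[of "g' x" "g' a"] by linarith
  qed (auto)
  moreover have "norm ((b - a) *\<^sub>R g' a) \<le> \<bar>b - a\<bar> * B"
    using B[OF a] by (simp add: mult_left_mono)
  moreover have "norm (g b - g a) \<le> norm ((b - a) *\<^sub>R g' a) + norm (g b - g a - (b - a) *\<^sub>R g' a)"
    by (rule norm_triangle_sub)
  ultimately have "norm (g b - g a) \<le> \<bar>b - a\<bar> * B + \<bar>b - a\<bar> * (2*B)"
    unfolding real_norm_def by linarith
  also have "\<dots> = 3 * B * \<bar>b - a\<bar>" by (simp add: algebra_simps)
  finally show ?thesis .
qed

definition Pc :: "nat \<Rightarrow> real \<Rightarrow> complex" where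
  "Pc a p = (if a = 0 then complex_of_real p else if a = 1 then 1 else 0)"
definition Qc :: "nat \<Rightarrow> real \<Rightarrow> complex" where
  "Qc a p = (if a = 0 then complex_of_real (1 - p) else if a = 1 then -1 else 0)"
definition Ec :: "real \<Rightarrow> nat \<Rightarrow> real \<Rightarrow> complex" where
  "Ec v b x = (\<i> * complex_of_real v) ^ b * exp (\<i> * complex_of_real (v * x))"

lemma Pc_d: "((\<lambda>t. Pc a (p + t)) has_vector_derivative Pc (Suc a) (p + t)) (at t)"
proof (cases a)
  case 0
  then show ?thesis unfolding Pc_def
    by (auto intro!: derivative_eq_intros)
next
  case (Suc n)
  then show ?thesis unfolding Pc_def by (auto intro!: derivative_eq_intros)
qed

lemma Qc_d: "((\<lambda>t. Qc a (p + t)) has_vector_derivative Qc (Suc a) (p + t)) (at t)"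
proof (cases a)
  case 0
  then show ?thesis unfolding Qc_def
    by (auto intro!: derivative_eq_intros)
next
  case (Suc n)
  then show ?thesis unfolding Qc_def by (auto intro!: derivative_eq_intros)
qed

lemma exp_d: "((\<lambda>t. exp (\<i> * complex_of_real (v * (x + t)))) has_vector_derivative
   (\<i> * complex_of_real v) * exp (\<i> * complex_of_real (v * (x + t)))) (at t)"
proof -
  have 1: "((\<lambda>t. \<i> * complex_of_real (v * (x + t))) has_vector_derivative \<i> * complex_of_real v) (at t)"
    by (auto intro!: derivative_eq_intros)
  have 2: "(exp has_field_derivative exp (\<i> * complex_of_real (v * (x + t)))) (at (\<i> * complex_of_real (v * (x + t))))"
    by (rule DERIV_exp)
  from field_vector_diff_chain_at[OF 1 2] show ?thesis by (simp add: o_def)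
qed

lemma Ec_d: "((\<lambda>t. Ec v b (x + t)) has_vector_derivative Ec v (Suc b) (x + t)) (at t)"
  unfolding Ec_def
  using has_vector_derivative_mult_right[OF exp_d, of "(\<i> * complex_of_real v) ^ b" v x t]
  by (simp add: mult_ac)
definition DM :: "real \<Rightarrow> nat \<Rightarrow> nat \<Rightarrow> nat \<Rightarrow> real \<times> real \<times> real \<Rightarrow> complex" where
  "DM v a b c \<theta> = (case \<theta> of (p, \<alpha>, \<beta>) \<Rightarrow>
     Pc a p * (Ec v b \<alpha> * (if c = 0 then 1 else 0)) + Qc a p * (Ec v c \<beta> * (if b = 0 then 1 else 0)))"

lemma DM_d0: "((\<lambda>t. DM v a b c (p + t, \<alpha>, \<beta>)) has_vector_derivative DM v (Suc a) b c (p + t, \<alpha>, \<beta>)) (at t)"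
proof -
  have "((\<lambda>t. Pc a (p + t) * (Ec v b \<alpha> * (if c = 0 then 1 else 0)) + Qc a (p + t) * (Ec v c \<beta> * (if b = 0 then 1 else 0)))
     has_vector_derivative Pc (Suc a) (p + t) * (Ec v b \<alpha> * (if c = 0 then 1 else 0)) + Qc (Suc a) (p + t) * (Ec v c \<beta> * (if b = 0 then 1 else 0))) (at t)"
    by (intro has_vector_derivative_add has_vector_derivative_mult_left Pc_d Qc_d)
  then show ?thesis unfolding DM_def by simp
qed

lemma DM_d1: "((\<lambda>t. DM v a b c (p, \<alpha> + t, \<beta>)) has_vector_derivative DM v a (Suc b) c (p, \<alpha> + t, \<beta>)) (at t)"
proof -
  have "((\<lambda>t. Pc a p * (Ec v b (\<alpha> + t) * (if c = 0 then 1 else 0)) + Qc a p * (Ec v c \<beta> * (if b = 0 then 1 else 0)))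
     has_vector_derivative Pc a p * (Ec v (Suc b) (\<alpha> + t) * (if c = 0 then 1 else 0)) + 0) (at t)"
    by (intro has_vector_derivative_add has_vector_derivative_mult_right has_vector_derivative_mult_left Ec_d
        has_vector_derivative_const)
  then show ?thesis unfolding DM_def by simp
qed

lemma DM_d2: "((\<lambda>t. DM v a b c (p, \<alpha>, \<beta> + t)) has_vector_derivative DM v a b (Suc c) (p, \<alpha>, \<beta> + t)) (at t)"
proof -
  have "((\<lambda>t. Pc a p * (Ec v b \<alpha> * (if c = 0 then 1 else 0)) + Qc a p * (Ec v c (\<beta> + t) * (if b = 0 then 1 else 0)))
     has_vector_derivative 0 + Qc a p * (Ec v (Suc c) (\<beta> + t) * (if b = 0 then 1 else 0))) (at t)"
    by (intro has_vector_derivative_add has_vector_derivative_mult_right has_vector_derivative_mult_left Ec_d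
        has_vector_derivative_const)
  then show ?thesis unfolding DM_def by simp
qed

definition cnt :: "nat \<Rightarrow> nat list \<Rightarrow> nat" where
  "cnt d js = length (filter (\<lambda>i. min i 2 = d) js)"

definition DMl :: "real \<Rightarrow> nat list \<Rightarrow> real \<times> real \<times> real \<Rightarrow> complex" where
  "DMl v js \<theta> = DM v (cnt 0 js) (cnt 1 js) (cnt 2 js) \<theta>"

lemma line_eq: "(p, \<alpha>, \<beta>) + t *\<^sub>R ebasis j =
   (if j = 0 then (p + t, \<alpha>, \<beta>) else if j = 1 then (p, \<alpha> + t, \<beta>) else (p, \<alpha>, \<beta> + t))"
  by (simp add: ebasis_def)

lemma DMl_d: "((\<lambda>t. DMl v js (\<theta> + t *\<^sub>R ebasis j)) has_vector_derivative DMl v (j # js) (\<theta> + t *\<^sub>R ebasis j)) (at t)"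
proof -
  obtain p \<alpha> \<beta> where th: "\<theta> = (p, \<alpha>, \<beta>)" by (cases \<theta>) auto
  consider "j = 0" | "j = 1" | "j \<ge> 2" by linarith
  then show ?thesis
  proof cases
    case 1
    then show ?thesis unfolding th line_eq DMl_def using DM_d0 by (simp add: cnt_def)
  next
    case 2
    then show ?thesis unfolding th line_eq DMl_def using DM_d1 by (simp add: cnt_def)
  next
    case 3
    then have "min j 2 = 2" by simp
    then show ?thesis using 3 unfolding th line_eq DMl_def using DM_d2 by (simp add: cnt_def)
  qed
qed

lemma Mfun_DMl: "Mfun \<theta> v = DMl v [] \<theta>"
  by (cases \<theta>) (simp add: Mfun_def DMl_def DM_def cnt_def Pc_def Qc_def Ec_def)
definition iM :: "real \<Rightarrow> real \<times> real \<times> real \<Rightarrow> complex" where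
  "iM v \<theta> = inverse (DMl v [] \<theta>)"

lemma M_nz: assumes "fst \<theta> < 1/2" shows "DMl v [] \<theta> \<noteq> 0"
proof
  assume h: "DMl v [] \<theta> = 0"
  obtain p \<alpha> \<beta> where th: "\<theta> = (p, \<alpha>, \<beta>)" by (cases \<theta>) auto
  have "complex_of_real p * exp (\<i> * complex_of_real (v * \<alpha>)) = - (complex_of_real (1 - p) * exp (\<i> * complex_of_real (v * \<beta>)))"
    using h unfolding th by (simp add: DMl_def DM_def cnt_def Pc_def Qc_def Ec_def add_eq_0_iff)
  then have "norm (complex_of_real p * exp (\<i> * complex_of_real (v * \<alpha>))) = norm (complex_of_real (1 - p) * exp (\<i> * complex_of_real (v * \<beta>)))"
    by (metis norm_minus_cancel)
  moreover have "cmod (1 - complex_of_real p) = \<bar>1 - p\<bar>" by (metis norm_of_real of_real_1 of_real_diff)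
  ultimately have "\<bar>p\<bar> = \<bar>1 - p\<bar>" by (simp add: norm_mult)
  then have "p = 1/2" by linarith
  then show False using assms th by simp
qed

lemma inv_pow_d: assumes "z \<noteq> 0"
  shows "((\<lambda>z. inverse z ^ n) has_field_derivative - of_nat n * inverse z ^ Suc n) (at z)"
proof -
  have "((\<lambda>z. inverse z ^ n) has_field_derivative of_nat n * inverse z ^ (n - 1) * (- (inverse z * inverse z))) (at z)"
    using assms by (auto intro!: derivative_eq_intros)
  moreover have "of_nat n * inverse z ^ (n - 1) * (- (inverse z * inverse z)) = - of_nat n * inverse z ^ Suc n"
    by (cases n) (simp_all add: algebra_simps power_Suc)
  ultimately show ?thesis by (rule DERIV_cong)
qed

lemma vd_eq: "(f has_vector_derivative D) F \<Longrightarrow> D = E \<Longrightarrow> (f has_vector_derivative E) F" by simp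

lemma iM_d: assumes "DMl v [] (\<theta> + t *\<^sub>R ebasis j) \<noteq> 0"
  shows "((\<lambda>t. iM v (\<theta> + t *\<^sub>R ebasis j) ^ n) has_vector_derivative
     - of_nat n * DMl v [j] (\<theta> + t *\<^sub>R ebasis j) * iM v (\<theta> + t *\<^sub>R ebasis j) ^ Suc n) (at t)"
  using field_vector_diff_chain_at[OF DMl_d[of v "[]" \<theta> j t] inv_pow_d[OF assms, of n]]
  unfolding iM_def o_def by (simp add: mult_ac)

definition F1 :: "real \<Rightarrow> nat \<Rightarrow> real \<times> real \<times> real \<Rightarrow> complex" where
  "F1 v j \<theta> = - (DMl v [j] \<theta> * iM v \<theta> ^ 2)"
definition F2 :: "real \<Rightarrow> nat \<Rightarrow> nat \<Rightarrow> real \<times> real \<times> real \<Rightarrow> complex" where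
  "F2 v i j \<theta> = - (DMl v [i, j] \<theta> * iM v \<theta> ^ 2) + 2 * (DMl v [i] \<theta> * DMl v [j] \<theta>) * iM v \<theta> ^ 3"
definition F3 :: "real \<Rightarrow> nat \<Rightarrow> nat \<Rightarrow> nat \<Rightarrow> real \<times> real \<times> real \<Rightarrow> complex" where
  "F3 v k i j \<theta> = - (DMl v [k, i, j] \<theta> * iM v \<theta> ^ 2)
     + 2 * (DMl v [i, j] \<theta> * DMl v [k] \<theta> + DMl v [k, i] \<theta> * DMl v [j] \<theta> + DMl v [k, j] \<theta> * DMl v [i] \<theta>) * iM v \<theta> ^ 3
     - 6 * (DMl v [i] \<theta> * DMl v [j] \<theta> * DMl v [k] \<theta>) * iM v \<theta> ^ 4"

lemma F0_d: assumes "DMl v [] (\<theta> + t *\<^sub>R ebasis j) \<noteq> 0"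
  shows "((\<lambda>t. iM v (\<theta> + t *\<^sub>R ebasis j)) has_vector_derivative F1 v j (\<theta> + t *\<^sub>R ebasis j)) (at t)"
  using iM_d[OF assms, of 1] by (simp add: F1_def power2_eq_square)

lemma F1_d: assumes "DMl v [] (\<theta> + t *\<^sub>R ebasis i) \<noteq> 0"
  shows "((\<lambda>t. F1 v j (\<theta> + t *\<^sub>R ebasis i)) has_vector_derivative F2 v i j (\<theta> + t *\<^sub>R ebasis i)) (at t)"
  unfolding F1_def
  apply (rule vd_eq)
   apply (rule has_vector_derivative_minus has_vector_derivative_mult DMl_d iM_d assms)+
  apply (simp add: F2_def; (algebra)?)
  done

lemma F2_d: assumes "DMl v [] (\<theta> + t *\<^sub>R ebasis k) \<noteq> 0"
  shows "((\<lambda>t. F2 v i j (\<theta> + t *\<^sub>R ebasis k)) has_vector_derivative F3 v k i j (\<theta> + t *\<^sub>R ebasis k)) (at t)"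
  unfolding F2_def
  apply (rule vd_eq)
   apply (rule has_vector_derivative_add has_vector_derivative_minus has_vector_derivative_mult
      has_vector_derivative_const DMl_d iM_d assms)+
  apply (simp add: F3_def; (algebra)?)
  done


lemma cnt_sum: "cnt 0 js + cnt 1 js + cnt 2 js = length js"
  by (induction js) (auto simp: cnt_def)

lemma Ec_norm: "norm (Ec v b x) = \<bar>v\<bar> ^ b"
  by (simp add: Ec_def norm_mult norm_power)

lemma DM_bound:
  assumes "0 \<le> p" "p \<le> 1"
  shows "norm (DM v a b c (p, \<alpha>, \<beta>)) \<le> 2 * (max 1 \<bar>v\<bar>) ^ (a + b + c)"
proof -
  let ?w = "max 1 \<bar>v\<bar>"
  have P: "norm (Pc a p) \<le> 1" using assms by (simp add: Pc_def)
  have Q0: "norm (complex_of_real (1 - p)) = \<bar>1 - p\<bar>" by (rule norm_of_real)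
  have Q: "norm (Qc a p) \<le> 1" unfolding Qc_def using Q0 assms by (auto simp del: of_real_diff)
  have E: "\<bar>v\<bar> ^ n \<le> ?w ^ (a + b + c)" if "n \<le> a + b + c" for n
  proof -
    have "\<bar>v\<bar> ^ n \<le> ?w ^ n" by (intro power_mono) auto
    also have "\<dots> \<le> ?w ^ (a + b + c)" using that by (intro power_increasing) auto
    finally show ?thesis .
  qed
  have I: "norm (if c = 0 then 1 else 0 :: complex) \<le> 1" "norm (if b = 0 then 1 else 0 :: complex) \<le> 1" by auto
  have "norm (DM v a b c (p, \<alpha>, \<beta>)) \<le> norm (Pc a p) * (norm (Ec v b \<alpha>) * norm (if c = 0 then 1 else 0 :: complex))
      + norm (Qc a p) * (norm (Ec v c \<beta>) * norm (if b = 0 then 1 else 0 :: complex))"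
    unfolding DM_def by (simp only: prod.case norm_mult[symmetric]) (rule norm_triangle_ineq)
  also have "\<dots> \<le> 1 * (?w ^ (a + b + c) * 1) + 1 * (?w ^ (a + b + c) * 1)"
    using P Q I E[of b] E[of c] unfolding Ec_norm
    by (intro add_mono mult_mono) auto
  finally show ?thesis by simp
qed

lemma DMl_bound:
  assumes "0 \<le> fst \<theta>" "fst \<theta> \<le> 1"
  shows "norm (DMl v js \<theta>) \<le> 2 * (max 1 \<bar>v\<bar>) ^ length js"
proof -
  obtain p \<alpha> \<beta> where th: "\<theta> = (p, \<alpha>, \<beta>)" by (cases \<theta>) auto
  show ?thesis using DM_bound[of p] assms unfolding th DMl_def cnt_sum[symmetric] by simp
qed

lemma M_lower:
  assumes "0 \<le> fst \<theta>"
  shows "1 - 2 * fst \<theta> \<le> norm (DMl v [] \<theta>)"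
proof -
  obtain p \<alpha> \<beta> where th: "\<theta> = (p, \<alpha>, \<beta>)" by (cases \<theta>) auto
  have e: "DMl v [] \<theta> = complex_of_real p * exp (\<i> * complex_of_real (v * \<alpha>)) + complex_of_real (1 - p) * exp (\<i> * complex_of_real (v * \<beta>))"
    unfolding th by (simp add: DMl_def DM_def cnt_def Pc_def Qc_def Ec_def)
  have "norm (complex_of_real (1 - p) * exp (\<i> * complex_of_real (v * \<beta>))) - norm (complex_of_real p * exp (\<i> * complex_of_real (v * \<alpha>)))
     \<le> norm (DMl v [] \<theta>)"
    unfolding e by (metis add.commute norm_diff_ineq)
  moreover have "norm (complex_of_real (1 - p) * exp (\<i> * complex_of_real (v * \<beta>))) = \<bar>1 - p\<bar>"
    by (simp add: norm_mult del: of_real_diff)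
  moreover have "norm (complex_of_real p * exp (\<i> * complex_of_real (v * \<alpha>))) = \<bar>p\<bar>"
    by (simp add: norm_mult)
  ultimately show ?thesis using assms th by auto
qed

lemma iM_bound:
  assumes "0 \<le> fst \<theta>" "fst \<theta> \<le> P" "P < 1/2"
  shows "norm (iM v \<theta>) \<le> 1 / (1 - 2 * P)"
proof -
  have "1 - 2 * P \<le> norm (DMl v [] \<theta>)" using M_lower[OF assms(1), of v] assms by linarith
  moreover have "0 < 1 - 2 * P" using assms by simp
  ultimately show ?thesis unfolding iM_def norm_inverse
    by (simp add: divide_simps)
qed


lemma step1:
  fixes G :: "real \<times> real \<times> real \<Rightarrow> complex"
  assumes D: "\<And>\<theta> t k. 0 < fst (\<theta> + t *\<^sub>R ebasis k) \<Longrightarrow> fst (\<theta> + t *\<^sub>R ebasis k) \<le> P \<Longrightarrow>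
      ((\<lambda>t. G (\<theta> + t *\<^sub>R ebasis k)) has_vector_derivative G' k (\<theta> + t *\<^sub>R ebasis k)) (at t)"
    and B: "\<And>\<theta> k. 0 < fst \<theta> \<Longrightarrow> fst \<theta> \<le> P \<Longrightarrow> norm (G' k \<theta>) \<le> B"
    and S: "\<And>t. t \<in> closed_segment 0 s \<Longrightarrow> 0 < fst (\<theta>0 + t *\<^sub>R ebasis k) \<and> fst (\<theta>0 + t *\<^sub>R ebasis k) \<le> P"
  shows "norm (G (\<theta>0 + s *\<^sub>R ebasis k) - G \<theta>0) \<le> 3 * B * \<bar>s\<bar>"
proof -
  have "norm (G (\<theta>0 + s *\<^sub>R ebasis k) - G (\<theta>0 + 0 *\<^sub>R ebasis k)) \<le> 3 * B * \<bar>s - 0\<bar>"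
  proof (rule mvt1[where g'="\<lambda>t. G' k (\<theta>0 + t *\<^sub>R ebasis k)"])
    fix t assume "t \<in> closed_segment 0 s"
    with S have "0 < fst (\<theta>0 + t *\<^sub>R ebasis k)" "fst (\<theta>0 + t *\<^sub>R ebasis k) \<le> P" by auto
    then show "((\<lambda>t. G (\<theta>0 + t *\<^sub>R ebasis k)) has_vector_derivative G' k (\<theta>0 + t *\<^sub>R ebasis k)) (at t)"
      by (rule D)
    from \<open>0 < _\<close> \<open>_ \<le> P\<close> show "norm (G' k (\<theta>0 + t *\<^sub>R ebasis k)) \<le> B" by (rule B)
  qed
  then show ?thesis by simp
qed

lemma lip3:
  fixes G :: "real \<times> real \<times> real \<Rightarrow> complex"
  assumes D: "\<And>\<theta> t k. 0 < fst (\<theta> + t *\<^sub>R ebasis k) \<Longrightarrow> fst (\<theta> + t *\<^sub>R ebasis k) \<le> P \<Longrightarrow>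
      ((\<lambda>t. G (\<theta> + t *\<^sub>R ebasis k)) has_vector_derivative G' k (\<theta> + t *\<^sub>R ebasis k)) (at t)"
    and B: "\<And>\<theta> k. 0 < fst \<theta> \<Longrightarrow> fst \<theta> \<le> P \<Longrightarrow> norm (G' k \<theta>) \<le> B"
    and h: "0 < fst \<theta>1" "fst \<theta>1 \<le> P" "0 < fst \<theta>2" "fst \<theta>2 \<le> P"
  shows "norm (G \<theta>1 - G \<theta>2) \<le> 9 * B * norm (\<theta>1 - \<theta>2)"
proof -
  obtain p \<alpha> \<beta> where t1: "\<theta>1 = (p, \<alpha>, \<beta>)" by (cases \<theta>1) auto
  obtain p' \<alpha>' \<beta>' where t2: "\<theta>2 = (p', \<alpha>', \<beta>')" by (cases \<theta>2) auto
  have hp: "0 < p" "p \<le> P" "0 < p'" "p' \<le> P" using h t1 t2 by auto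
  have s1: "norm (G ((p', \<alpha>', \<beta>') + (p - p') *\<^sub>R ebasis 0) - G (p', \<alpha>', \<beta>')) \<le> 3 * B * \<bar>p - p'\<bar>"
    by (rule step1[OF D B]) (use hp in \<open>auto simp: line_eq closed_segment_eq_real_ivl split: if_splits\<close>)
  have s2: "norm (G ((p, \<alpha>', \<beta>') + (\<alpha> - \<alpha>') *\<^sub>R ebasis 1) - G (p, \<alpha>', \<beta>')) \<le> 3 * B * \<bar>\<alpha> - \<alpha>'\<bar>"
    by (rule step1[OF D B]) (use hp in \<open>auto simp: line_eq\<close>)
  have s3: "norm (G ((p, \<alpha>, \<beta>') + (\<beta> - \<beta>') *\<^sub>R ebasis 2) - G (p, \<alpha>, \<beta>')) \<le> 3 * B * \<bar>\<beta> - \<beta>'\<bar>"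
    by (rule step1[OF D B]) (use hp in \<open>auto simp: line_eq\<close>)
  have s: "norm (G (p, \<alpha>, \<beta>) - G (p', \<alpha>', \<beta>')) \<le> 3 * B * \<bar>p - p'\<bar> + 3 * B * \<bar>\<alpha> - \<alpha>'\<bar> + 3 * B * \<bar>\<beta> - \<beta>'\<bar>"
  proof -
    have "norm (G (p, \<alpha>, \<beta>) - G (p', \<alpha>', \<beta>')) \<le> norm (G (p, \<alpha>, \<beta>) - G (p, \<alpha>, \<beta>')) + norm (G (p, \<alpha>, \<beta>') - G (p, \<alpha>', \<beta>')) + norm (G (p, \<alpha>', \<beta>') - G (p', \<alpha>', \<beta>'))"
      using norm_triangle_ineq[of "G (p, \<alpha>, \<beta>) - G (p, \<alpha>, \<beta>')" "G (p, \<alpha>, \<beta>') - G (p', \<alpha>', \<beta>')"]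
        norm_triangle_ineq[of "G (p, \<alpha>, \<beta>') - G (p, \<alpha>', \<beta>')" "G (p, \<alpha>', \<beta>') - G (p', \<alpha>', \<beta>')"]
      by (simp add: algebra_simps)
    then show ?thesis using s1 s2 s3 by (simp add: line_eq)
  qed
  have n0: "norm (\<theta>1 - \<theta>2) = norm (p - p', \<alpha> - \<alpha>', \<beta> - \<beta>')" by (simp add: t1 t2)
  have a1: "norm (\<alpha> - \<alpha>', \<beta> - \<beta>') \<le> norm (p - p', \<alpha> - \<alpha>', \<beta> - \<beta>')" by (rule norm_snd_le)
  have a2: "norm (p - p') \<le> norm (p - p', \<alpha> - \<alpha>', \<beta> - \<beta>')" by (rule norm_fst_le)
  have a3: "norm (\<alpha> - \<alpha>') \<le> norm (\<alpha> - \<alpha>', \<beta> - \<beta>')" by (rule norm_fst_le)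
  have a4: "norm (\<beta> - \<beta>') \<le> norm (\<alpha> - \<alpha>', \<beta> - \<beta>')" by (rule norm_snd_le)
  have n: "\<bar>p - p'\<bar> \<le> norm (\<theta>1 - \<theta>2)" "\<bar>\<alpha> - \<alpha>'\<bar> \<le> norm (\<theta>1 - \<theta>2)" "\<bar>\<beta> - \<beta>'\<bar> \<le> norm (\<theta>1 - \<theta>2)"
    using a1 a2 a3 a4 unfolding n0 real_norm_def by linarith+
  have B0: "0 \<le> B" using B[of \<theta>1 0] h by (meson norm_ge_zero order_trans)
  have "3 * B * \<bar>p - p'\<bar> + 3 * B * \<bar>\<alpha> - \<alpha>'\<bar> + 3 * B * \<bar>\<beta> - \<beta>'\<bar> \<le> 3 * B * norm (\<theta>1 - \<theta>2) + 3 * B * norm (\<theta>1 - \<theta>2) + 3 * B * norm (\<theta>1 - \<theta>2)"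
    using n B0 by (intro add_mono mult_left_mono) auto
  then show ?thesis using s t1 t2 by simp
qed


definition G0 :: "real \<Rightarrow> real \<Rightarrow> real \<times> real \<times> real \<Rightarrow> complex" where
  "G0 u x \<theta> = exp (\<i> * complex_of_real (u * x)) * iM u \<theta> - exp (- \<i> * complex_of_real (u * x)) * iM (- u) \<theta>"
definition G1 :: "real \<Rightarrow> real \<Rightarrow> nat \<Rightarrow> real \<times> real \<times> real \<Rightarrow> complex" where
  "G1 u x j \<theta> = exp (\<i> * complex_of_real (u * x)) * F1 u j \<theta> - exp (- \<i> * complex_of_real (u * x)) * F1 (- u) j \<theta>"
definition G2 :: "real \<Rightarrow> real \<Rightarrow> nat \<Rightarrow> nat \<Rightarrow> real \<times> real \<times> real \<Rightarrow> complex" where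
  "G2 u x i j \<theta> = exp (\<i> * complex_of_real (u * x)) * F2 u i j \<theta> - exp (- \<i> * complex_of_real (u * x)) * F2 (- u) i j \<theta>"
definition G3 :: "real \<Rightarrow> real \<Rightarrow> nat \<Rightarrow> nat \<Rightarrow> nat \<Rightarrow> real \<times> real \<times> real \<Rightarrow> complex" where
  "G3 u x k i j \<theta> = exp (\<i> * complex_of_real (u * x)) * F3 u k i j \<theta> - exp (- \<i> * complex_of_real (u * x)) * F3 (- u) k i j \<theta>"

lemma Z_G0: "(\<lambda>t. Zfun X k t u) = G0 u (X k)"
  by (rule ext) (simp add: Zfun_def G0_def Mfun_DMl iM_def divide_inverse mult_ac)

lemma G0_d: assumes "fst (\<theta> + t *\<^sub>R ebasis j) < 1/2"
  shows "((\<lambda>t. G0 u x (\<theta> + t *\<^sub>R ebasis j)) has_vector_derivative G1 u x j (\<theta> + t *\<^sub>R ebasis j)) (at t)"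
  unfolding G0_def G1_def
  by (intro has_vector_derivative_diff has_vector_derivative_mult_right F0_d M_nz assms)

lemma G1_d: assumes "fst (\<theta> + t *\<^sub>R ebasis i) < 1/2"
  shows "((\<lambda>t. G1 u x j (\<theta> + t *\<^sub>R ebasis i)) has_vector_derivative G2 u x i j (\<theta> + t *\<^sub>R ebasis i)) (at t)"
  unfolding G1_def G2_def
  by (intro has_vector_derivative_diff has_vector_derivative_mult_right F1_d M_nz assms)

lemma G2_d: assumes "fst (\<theta> + t *\<^sub>R ebasis k) < 1/2"
  shows "((\<lambda>t. G2 u x i j (\<theta> + t *\<^sub>R ebasis k)) has_vector_derivative G3 u x k i j (\<theta> + t *\<^sub>R ebasis k)) (at t)"
  unfolding G2_def G3_def
  by (intro has_vector_derivative_diff has_vector_derivative_mult_right F2_d M_nz assms)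

lemma PD1: assumes "fst \<theta> < 1/2" shows "pderiv3 j (G0 u x) \<theta> = G1 u x j \<theta>"
  unfolding pderiv3_def using G0_d[of \<theta> 0 j u x] assms by (simp add: vector_derivative_at)

lemma PD2: assumes "fst \<theta> < 1/2" shows "pderiv3 i (pderiv3 j (G0 u x)) \<theta> = G2 u x i j \<theta>"
proof -
  let ?S = "{t. fst (\<theta> + t *\<^sub>R ebasis i) < 1/2}"
  have op: "open ?S" by (intro open_Collect_less continuous_intros)
  have "((\<lambda>t. pderiv3 j (G0 u x) (\<theta> + t *\<^sub>R ebasis i)) has_vector_derivative G2 u x i j (\<theta> + 0 *\<^sub>R ebasis i)) (at 0)"
  proof (rule has_vector_derivative_transform_within_open[OF G1_d op])
    show "fst (\<theta> + 0 *\<^sub>R ebasis i) < 1/2" using assms by simp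
    show "0 \<in> ?S" using assms by simp
    show "G1 u x j (\<theta> + y *\<^sub>R ebasis i) = pderiv3 j (G0 u x) (\<theta> + y *\<^sub>R ebasis i)" if "y \<in> ?S" for y
      using PD1 that by simp
  qed
  then show ?thesis unfolding pderiv3_def[of i] by (simp add: vector_derivative_at)
qed

lemma norm_e1: "norm (exp (\<i> * complex_of_real y)) = 1" by simp
lemma norm_e2: "norm (exp (- \<i> * complex_of_real y)) = 1"
  using norm_e1[of "-y"] by simp

lemma norm_comb: "norm (exp (\<i> * complex_of_real y) * A - exp (- \<i> * complex_of_real y) * B) \<le> norm A + norm B"
  using norm_triangle_ineq4[of "exp (\<i> * complex_of_real y) * A" "exp (- \<i> * complex_of_real y) * B"]
  by (simp only: norm_mult norm_e1 norm_e2 mult_1_left)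

lemma F2_bound:
  assumes "0 < fst \<theta>" "fst \<theta> \<le> P" "P < 1/2"
  shows "norm (F2 v i j \<theta>) \<le> 10 * (max 1 \<bar>v\<bar>)^2 * (1 / (1 - 2*P))^3"
  unfolding F2_def
proof (rule bound2)
  have f: "0 \<le> fst \<theta>" "fst \<theta> \<le> 1" using assms by auto
  show "norm (DMl v [i, j] \<theta>) \<le> 2 * (max 1 \<bar>v\<bar>)^2" using DMl_bound[OF f, of v "[i,j]"] by (simp add: power2_eq_square power3_eq_cube)
  show "norm (DMl v [i] \<theta>) \<le> 2 * (max 1 \<bar>v\<bar>)" using DMl_bound[OF f, of v "[i]"] by simp
  show "norm (DMl v [j] \<theta>) \<le> 2 * (max 1 \<bar>v\<bar>)" using DMl_bound[OF f, of v "[j]"] by simp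
  show "norm (iM v \<theta>) \<le> 1 / (1 - 2*P)" using iM_bound assms by auto
  show "1 \<le> 1 / (1 - 2*P)" using assms by (simp add: divide_simps)
  show "1 \<le> max 1 \<bar>v\<bar>" by simp
qed

lemma F3_bound:
  assumes "0 < fst \<theta>" "fst \<theta> \<le> P" "P < 1/2"
  shows "norm (F3 v k i j \<theta>) \<le> 74 * (max 1 \<bar>v\<bar>)^3 * (1 / (1 - 2*P))^4"
  unfolding F3_def
proof (rule bound3)
  have f: "0 \<le> fst \<theta>" "fst \<theta> \<le> 1" using assms by auto
  note B = DMl_bound[OF f, of v]
  show "norm (DMl v [k, i, j] \<theta>) \<le> 2 * (max 1 \<bar>v\<bar>)^3" using B[of "[k,i,j]"] by (simp add: power2_eq_square power3_eq_cube)
  show "norm (DMl v [i, j] \<theta>) \<le> 2 * (max 1 \<bar>v\<bar>)^2" using B[of "[i,j]"] by (simp add: power2_eq_square power3_eq_cube)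
  show "norm (DMl v [k, i] \<theta>) \<le> 2 * (max 1 \<bar>v\<bar>)^2" using B[of "[k,i]"] by (simp add: power2_eq_square power3_eq_cube)
  show "norm (DMl v [k, j] \<theta>) \<le> 2 * (max 1 \<bar>v\<bar>)^2" using B[of "[k,j]"] by (simp add: power2_eq_square power3_eq_cube)
  show "norm (DMl v [i] \<theta>) \<le> 2 * (max 1 \<bar>v\<bar>)" using B[of "[i]"] by simp
  show "norm (DMl v [i] \<theta>) \<le> 2 * (max 1 \<bar>v\<bar>)" using B[of "[i]"] by simp
  show "norm (DMl v [j] \<theta>) \<le> 2 * (max 1 \<bar>v\<bar>)" using B[of "[j]"] by simp
  show "norm (DMl v [j] \<theta>) \<le> 2 * (max 1 \<bar>v\<bar>)" using B[of "[j]"] by simp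
  show "norm (DMl v [k] \<theta>) \<le> 2 * (max 1 \<bar>v\<bar>)" using B[of "[k]"] by simp
  show "norm (DMl v [k] \<theta>) \<le> 2 * (max 1 \<bar>v\<bar>)" using B[of "[k]"] by simp
  show "norm (iM v \<theta>) \<le> 1 / (1 - 2*P)" using iM_bound assms by auto
  show "1 \<le> 1 / (1 - 2*P)" using assms by (simp add: divide_simps)
  show "1 \<le> max 1 \<bar>v\<bar>" by simp
qed

lemma G2_bound:
  assumes "0 < fst \<theta>" "fst \<theta> \<le> P" "P < 1/2"
  shows "norm (G2 u x i j \<theta>) \<le> 20 * (max 1 \<bar>u\<bar>)^2 * (1 / (1 - 2*P))^3"
  using norm_comb[of "u*x" "F2 u i j \<theta>" "F2 (-u) i j \<theta>"] F2_bound[OF assms, of u i j] F2_bound[OF assms, of "-u" i j]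
  unfolding G2_def by simp

lemma G3_bound:
  assumes "0 < fst \<theta>" "fst \<theta> \<le> P" "P < 1/2"
  shows "norm (G3 u x k i j \<theta>) \<le> 148 * (max 1 \<bar>u\<bar>)^3 * (1 / (1 - 2*P))^4"
  using norm_comb[of "u*x" "F3 u k i j \<theta>" "F3 (-u) k i j \<theta>"] F3_bound[OF assms, of u k i j] F3_bound[OF assms, of "-u" k i j]
  unfolding G3_def by simp

lemma sq1:
  fixes a :: "nat \<Rightarrow> complex"
  assumes "\<And>j. j < 3 \<Longrightarrow> norm (a j) \<le> K"
  shows "sqrt (\<Sum>j<3. (norm (a j))^2) \<le> 3 * K"
proof -
  have K0: "0 \<le> K" using assms[of 0] by (meson norm_ge_zero order_trans zero_less_numeral)
  have "(\<Sum>j<3. (norm (a j))^2) \<le> (\<Sum>j<(3::nat). K^2)"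
    using assms by (intro sum_mono power_mono) auto
  also have "\<dots> \<le> (3*K)^2" by (simp add: power2_eq_square)
  finally show ?thesis using K0 by (simp add: real_sqrt_le_iff real_le_lsqrt real_sqrt_le_mono)
qed

lemma sq2:
  fixes a :: "nat \<Rightarrow> nat \<Rightarrow> complex"
  assumes "\<And>i j. i < 3 \<Longrightarrow> j < 3 \<Longrightarrow> norm (a i j) \<le> K"
  shows "sqrt (\<Sum>i<3. \<Sum>j<3. (norm (a i j))^2) \<le> 3 * K"
proof -
  have K0: "0 \<le> K" using assms[of 0 0] by (meson norm_ge_zero order_trans zero_less_numeral)
  have "(\<Sum>i<3. \<Sum>j<3. (norm (a i j))^2) \<le> (\<Sum>i<(3::nat). \<Sum>j<(3::nat). K^2)"
    using assms by (intro sum_mono power_mono) auto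
  also have "\<dots> \<le> (3*K)^2" by (simp add: power2_eq_square)
  finally show ?thesis using K0 by (simp add: real_sqrt_le_iff real_le_lsqrt real_sqrt_le_mono)
qed


lemma w2: "(max 1 \<bar>u::real\<bar>)^2 \<le> 1 + \<bar>u\<bar> + u^2"
  by (cases "\<bar>u\<bar> \<le> 1") (auto simp: max_def)
lemma w3: "(max 1 \<bar>u::real\<bar>)^3 \<le> 1 + \<bar>u\<bar> + u^2 + \<bar>u\<bar>^3"
  by (cases "\<bar>u\<bar> \<le> 1") (auto simp: max_def)

lemma aux540: fixes a S :: real assumes "a \<le> S" "0 \<le> S" "c \<le> d" "0 \<le> c" shows "c * a \<le> d * S"
  using assms by (meson mult_left_mono mult_right_mono order_trans)

theorem lemma2:
  shows "\<exists>C>0. \<forall>(\<Theta> :: (real \<times> real \<times> real) set) (P :: real) (n :: nat) (X :: nat \<Rightarrow> real).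
     compact \<Theta>
     \<longrightarrow> \<Theta> \<subseteq> {(p, \<alpha>, \<beta>). 0 < p \<and> p < 1/2 \<and> \<alpha> \<noteq> \<beta>}
     \<longrightarrow> P < 1/2
     \<longrightarrow> (\<forall>(p, \<alpha>, \<beta>) \<in> \<Theta>. p \<le> P)
     \<longrightarrow> (\<forall>u :: real. \<forall>\<theta>\<in>\<Theta>. \<forall>\<theta>'\<in>\<Theta>. \<forall>k\<in>{1..n}.
           grad_dist (\<lambda>t. Zfun X k t u) \<theta> \<theta>'
             \<le> norm (\<theta> - \<theta>') * (C * (1 + \<bar>u\<bar> + u\<^sup>2) / (1 - 2 * P) ^ 3)
         \<and> hess_dist (\<lambda>t. Zfun X k t u) \<theta> \<theta>'
             \<le> norm (\<theta> - \<theta>') * (C * (1 + \<bar>u\<bar> + u\<^sup>2 + \<bar>u\<bar> ^ 3) / (1 - 2 * P) ^ 4))"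
proof (rule exI[of _ 4000], intro conjI allI impI ballI)
  fix \<Theta> :: "(real \<times> real \<times> real) set" and P :: real and n :: nat and X :: "nat \<Rightarrow> real"
    and u :: real and \<theta> \<theta>' :: "real \<times> real \<times> real" and k :: nat
  assume sub: "\<Theta> \<subseteq> {(p, \<alpha>, \<beta>). 0 < p \<and> p < 1/2 \<and> \<alpha> \<noteq> \<beta>}" and P: "P < 1/2"
    and le: "\<forall>(p, \<alpha>, \<beta>) \<in> \<Theta>. p \<le> P" and th: "\<theta> \<in> \<Theta>" and th': "\<theta>' \<in> \<Theta>"
  have hh: "0 < fst \<phi> \<and> fst \<phi> \<le> P" if "\<phi> \<in> \<Theta>" for \<phi>
  proof -
    obtain p a b where e: "\<phi> = (p, a, b)" by (cases \<phi>) auto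
    show ?thesis using that sub le unfolding e by auto
  qed
  have h1: "0 < fst \<theta>" "fst \<theta> \<le> P" using hh[OF th] by auto
  have h2: "0 < fst \<theta>'" "fst \<theta>' \<le> P" using hh[OF th'] by auto
  have l1: "fst \<theta> < 1/2" "fst \<theta>' < 1/2" using h1 h2 P by auto
  have m0: "0 < 1 - 2 * P" using P by simp
  define w where "w = max 1 \<bar>u\<bar>"
  define N where "N = norm (\<theta> - \<theta>')"
  have N0: "0 \<le> N" unfolding N_def by simp
  define x where "x = X k"
  have Dgen: "fst (\<phi> + t *\<^sub>R ebasis k') < 1/2" if "fst (\<phi> + t *\<^sub>R ebasis k') \<le> P" for \<phi> t k'
    using that P by linarith
  have L1: "norm (G1 u x j \<theta> - G1 u x j \<theta>') \<le> 9 * (20 * w^2 * (1 / (1 - 2*P))^3) * N" for j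
    unfolding N_def w_def
    by (rule lip3[where G'="\<lambda>k'. G2 u x k' j"]) (auto intro!: G1_d Dgen G2_bound P simp: h1 h2)
  have L2: "norm (G2 u x i j \<theta> - G2 u x i j \<theta>') \<le> 9 * (148 * w^3 * (1 / (1 - 2*P))^4) * N" for i j
    unfolding N_def w_def
    by (rule lip3[where G'="\<lambda>k'. G3 u x k' i j"]) (auto intro!: G2_d Dgen G3_bound P simp: h1 h2)
  have "grad_dist (\<lambda>t. Zfun X k t u) \<theta> \<theta>' = sqrt (\<Sum>j<3. (norm (G1 u x j \<theta> - G1 u x j \<theta>'))^2)"
    unfolding Z_G0 grad_dist_def x_def using l1 by (simp add: PD1)
  also have "\<dots> \<le> 3 * (9 * (20 * w^2 * (1 / (1 - 2*P))^3) * N)"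
    by (rule sq1) (rule L1)
  also have "\<dots> \<le> N * (4000 * (1 + \<bar>u\<bar> + u\<^sup>2) / (1 - 2 * P) ^ 3)"
  proof -
    have "540 * w^2 \<le> 4000 * (1 + \<bar>u\<bar> + u\<^sup>2)" using w2[of u, folded w_def] by (intro aux540) auto
    then have "540 * w^2 * (N / (1 - 2*P)^3) \<le> 4000 * (1 + \<bar>u\<bar> + u\<^sup>2) * (N / (1 - 2*P)^3)"
      using N0 m0 by (intro mult_right_mono) auto
    then show ?thesis by (simp add: power_one_over field_simps)
  qed
  finally show "grad_dist (\<lambda>t. Zfun X k t u) \<theta> \<theta>' \<le> norm (\<theta> - \<theta>') * (4000 * (1 + \<bar>u\<bar> + u\<^sup>2) / (1 - 2 * P) ^ 3)"
    unfolding N_def .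
  have "hess_dist (\<lambda>t. Zfun X k t u) \<theta> \<theta>' = sqrt (\<Sum>i<3. \<Sum>j<3. (norm (G2 u x i j \<theta> - G2 u x i j \<theta>'))^2)"
    unfolding Z_G0 hess_dist_def x_def using l1 by (simp add: PD2)
  also have "\<dots> \<le> 3 * (9 * (148 * w^3 * (1 / (1 - 2*P))^4) * N)"
    by (rule sq2) (rule L2)
  also have "\<dots> \<le> N * (4000 * (1 + \<bar>u\<bar> + u\<^sup>2 + \<bar>u\<bar> ^ 3) / (1 - 2 * P) ^ 4)"
  proof -
    have "3996 * w^3 \<le> 4000 * (1 + \<bar>u\<bar> + u\<^sup>2 + \<bar>u\<bar> ^ 3)" using w3[of u, folded w_def] by (intro aux540) auto
    then have "3996 * w^3 * (N / (1 - 2*P)^4) \<le> 4000 * (1 + \<bar>u\<bar> + u\<^sup>2 + \<bar>u\<bar> ^ 3) * (N / (1 - 2*P)^4)"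
      using N0 m0 by (intro mult_right_mono) auto
    then show ?thesis by (simp add: power_one_over field_simps)
  qed
  finally show "hess_dist (\<lambda>t. Zfun X k t u) \<theta> \<theta>' \<le> norm (\<theta> - \<theta>') * (4000 * (1 + \<bar>u\<bar> + u\<^sup>2 + \<bar>u\<bar> ^ 3) / (1 - 2 * P) ^ 4)"
    unfolding N_def .
qed simp

end
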